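(* Let $M(E,I)$ be a free partially commutative monoid and $\alpha\in M(E,I)$. Then the comma category $\mathfrak FM(E,I)/\alpha$ is a partially ordered set, i.e. between any two objects there is at most one morphism, and two objects with morphisms in both directions are equal.
   Context: $M(E,I)$ is the monoid generated by a set $E$ (possibly infinite) with relations $ab=ba$ for $(a,b)\in I$, $I\subseteq E\times E$ irreflexive and symmetric. For a monoid $M$, $\mathfrak FM$ has objects the elements of $M$ and morphisms $\beta\to\gamma$ the pairs $(f,g)$ with $g\beta f=\gamma$; composition $(f_2,g_2)\circ(f_1,g_1)=(f_1f_2,g_2g_1)$. The comma category $\mathfrak FM/\alpha$ has objects pairs $(\beta,\varphi)$ with $\varphi:\beta\to\alpha$ a morphism of $\mathfrak FM$, and morphisms $(\beta,\varphi)\to(\beta',\varphi')$ the morphisms $\psi:\beta\to\beta'$ with $\varphi'\circ\psi=\varphi$. *)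

theory Defs
  imports "HOL-Algebra.Group"
begin

definition trace_step :: "('a \<times> 'a) set \<Rightarrow> ('a list \<times> 'a list) set" where
  "trace_step I = {(u @ [a, b] @ v, u @ [b, a] @ v) | u a b v. (a, b) \<in> I}"

definition trace_eq :: "('a \<times> 'a) set \<Rightarrow> ('a list \<times> 'a list) set" where
  "trace_eq I = (trace_step I \<union> (trace_step I)\<inverse>)\<^sup>*"

definition trace_class :: "('a \<times> 'a) set \<Rightarrow> 'a list \<Rightarrow> 'a list set" where
  "trace_class I w = {v. (w, v) \<in> trace_eq I}"

definition trace_mult :: "('a \<times> 'a) set \<Rightarrow> 'a list set \<Rightarrow> 'a list set \<Rightarrow> 'a list set" where
  "trace_mult I A B = {w. \<exists>u\<in>A. \<exists>v\<in>B. (u @ v, w) \<in> trace_eq I}"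

definition trace_monoid :: "'a set \<Rightarrow> ('a \<times> 'a) set \<Rightarrow> 'a list set monoid" where
  "trace_monoid E I =
     \<lparr> carrier = {trace_class I w | w. w \<in> lists E},
       mult = trace_mult I,
       one = trace_class I [] \<rparr>"

definition fm_hom :: "('m, 'b) monoid_scheme \<Rightarrow> 'm \<Rightarrow> 'm \<Rightarrow> 'm \<times> 'm \<Rightarrow> bool" where
  "fm_hom M \<beta> \<gamma> \<phi> \<longleftrightarrow> fst \<phi> \<in> carrier M \<and> snd \<phi> \<in> carrier M \<and>
      snd \<phi> \<otimes>\<^bsub>M\<^esub> \<beta> \<otimes>\<^bsub>M\<^esub> fst \<phi> = \<gamma>"

definition fm_comp :: "('m, 'b) monoid_scheme \<Rightarrow> 'm \<times> 'm \<Rightarrow> 'm \<times> 'm \<Rightarrow> 'm \<times> 'm" where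
  "fm_comp M \<phi>2 \<phi>1 = (fst \<phi>1 \<otimes>\<^bsub>M\<^esub> fst \<phi>2, snd \<phi>2 \<otimes>\<^bsub>M\<^esub> snd \<phi>1)"

definition comma_obj :: "('m, 'b) monoid_scheme \<Rightarrow> 'm \<Rightarrow> 'm \<times> ('m \<times> 'm) \<Rightarrow> bool" where
  "comma_obj M \<alpha> X \<longleftrightarrow> fst X \<in> carrier M \<and> fm_hom M (fst X) \<alpha> (snd X)"

definition comma_hom :: "('m, 'b) monoid_scheme \<Rightarrow> 'm \<Rightarrow> 'm \<times> ('m \<times> 'm) \<Rightarrow> 'm \<times> ('m \<times> 'm)
    \<Rightarrow> 'm \<times> 'm \<Rightarrow> bool" where
  "comma_hom M \<alpha> X Y \<psi> \<longleftrightarrow> fm_hom M (fst X) (fst Y) \<psi> \<and> fm_comp M (snd Y) \<psi> = snd X"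

end

theory Submission
  imports Defs
begin

lemma te_refl: "(x, x) \<in> trace_eq I"
  by (simp add: trace_eq_def)

lemma te_sym: "(x, y) \<in> trace_eq I \<Longrightarrow> (y, x) \<in> trace_eq I"
proof -
  have "sym ((trace_step I \<union> (trace_step I)\<inverse>)\<^sup>*)"
    by (rule sym_rtrancl) (auto simp: sym_def)
  then show "(x, y) \<in> trace_eq I \<Longrightarrow> (y, x) \<in> trace_eq I"
    unfolding trace_eq_def by (auto simp: sym_def)
qed

lemma te_trans: "(x, y) \<in> trace_eq I \<Longrightarrow> (y, z) \<in> trace_eq I \<Longrightarrow> (x, z) \<in> trace_eq I"
  unfolding trace_eq_def by (rule rtrancl_trans)

lemma step_ctx: "(x, y) \<in> trace_step I \<Longrightarrow> (w @ x @ z, w @ y @ z) \<in> trace_step I"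
  unfolding trace_step_def
  by clarsimp (metis append.assoc append_Cons)

lemma te_ctx: "(x, y) \<in> trace_eq I \<Longrightarrow> (w @ x @ z, w @ y @ z) \<in> trace_eq I"
  unfolding trace_eq_def
proof (induction rule: rtrancl_induct)
  case base then show ?case by simp
next
  case (step y z')
  then have "(w @ y @ z, w @ z' @ z) \<in> trace_step I \<union> (trace_step I)\<inverse>"
    using step_ctx by blast
  with step show ?case by (meson rtrancl.rtrancl_into_rtrancl)
qed

lemma te_app: "(x, x') \<in> trace_eq I \<Longrightarrow> (y, y') \<in> trace_eq I \<Longrightarrow> (x @ y, x' @ y') \<in> trace_eq I"
  using te_ctx[of x x' I "[]" y] te_ctx[of y y' I x' "[]"] te_trans by fastforce

lemma te_length: "(x, y) \<in> trace_eq I \<Longrightarrow> length x = length y"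
  unfolding trace_eq_def
  by (induction rule: rtrancl_induct) (auto simp: trace_step_def)

lemma step_rev: "sym I \<Longrightarrow> (x, y) \<in> trace_step I \<Longrightarrow> (rev x, rev y) \<in> trace_step I"
proof -
  assume s: "sym I" and st: "(x, y) \<in> trace_step I"
  then obtain u a b v where x: "x = u @ [a, b] @ v" and y: "y = u @ [b, a] @ v" and ab: "(a, b) \<in> I"
    unfolding trace_step_def by blast
  have "(b, a) \<in> I" using s ab by (auto simp: sym_def)
  moreover have "rev x = rev v @ [b, a] @ rev u" "rev y = rev v @ [a, b] @ rev u" using x y by auto
  ultimately show ?thesis unfolding trace_step_def by blast
qed

lemma te_rev: assumes "sym I" shows "(x, y) \<in> trace_eq I \<Longrightarrow> (rev x, rev y) \<in> trace_eq I"
  unfolding trace_eq_def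
proof (induction rule: rtrancl_induct)
  case base then show ?case by simp
next
  case (step y z)
  then have "(rev y, rev z) \<in> trace_step I \<union> (trace_step I)\<inverse>"
    using step_rev[OF assms] by blast
  with step show ?case by (meson rtrancl.rtrancl_into_rtrancl)
qed

lemma step_remove1: "irrefl I \<Longrightarrow> (x, y) \<in> trace_step I \<Longrightarrow> (remove1 a x, remove1 a y) \<in> trace_eq I"
proof -
  assume irr: "irrefl I" and st: "(x, y) \<in> trace_step I"
  then obtain u b c v where x: "x = u @ [b, c] @ v" and y: "y = u @ [c, b] @ v" and bc: "(b, c) \<in> I"
    unfolding trace_step_def by blast
  have "b \<noteq> c" using irr bc by (auto simp: irrefl_def)
  show ?thesis
  proof (cases "a \<in> set u")
    case True
    have "(remove1 a u @ [b, c] @ v, remove1 a u @ [c, b] @ v) \<in> trace_step I"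
      using bc unfolding trace_step_def by blast
    then have "(remove1 a u @ [b, c] @ v, remove1 a u @ [c, b] @ v) \<in> trace_eq I"
      unfolding trace_eq_def by blast
    then show ?thesis using True x y by (simp add: remove1_append)
  next
    case False
    show ?thesis
    proof (cases "a = b \<or> a = c")
      case True
      then show ?thesis using False x y \<open>b \<noteq> c\<close> by (auto simp: remove1_append te_refl)
    next
      case False2: False
      have "(u @ [b, c] @ remove1 a v, u @ [c, b] @ remove1 a v) \<in> trace_step I"
        using bc unfolding trace_step_def by blast
      then have "(u @ [b, c] @ remove1 a v, u @ [c, b] @ remove1 a v) \<in> trace_eq I"
        unfolding trace_eq_def by blast
      then show ?thesis using False False2 x y by (simp add: remove1_append)
    qed
  qed
qed

lemma te_remove1: assumes "irrefl I" shows "(x, y) \<in> trace_eq I \<Longrightarrow> (remove1 a x, remove1 a y) \<in> trace_eq I"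
  unfolding trace_eq_def
proof (induction rule: rtrancl_induct)
  case base then show ?case by simp
next
  case (step y z)
  then have "(remove1 a y, remove1 a z) \<in> trace_eq I"
    using step_remove1[OF assms] te_sym by blast
  with step show ?case unfolding trace_eq_def by (meson rtrancl_trans)
qed

lemma cancel_left: "irrefl I \<Longrightarrow> (w @ u, w @ v) \<in> trace_eq I \<Longrightarrow> (u, v) \<in> trace_eq I"
proof (induction w)
  case Nil then show ?case by simp
next
  case (Cons a w)
  then show ?case using te_remove1[OF Cons.prems(1) Cons.prems(2), of a] by simp
qed

lemma cancel_right: "irrefl I \<Longrightarrow> sym I \<Longrightarrow> (u @ w, v @ w) \<in> trace_eq I \<Longrightarrow> (u, v) \<in> trace_eq I"
  using te_rev[of I "u @ w" "v @ w"] cancel_left[of I "rev w" "rev u" "rev v"] te_rev[of I "rev u" "rev v"]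
  by simp

lemma cls_eq: "trace_class I u = trace_class I v \<longleftrightarrow> (u, v) \<in> trace_eq I"
proof
  assume "trace_class I u = trace_class I v"
  then show "(u, v) \<in> trace_eq I" using te_refl[of v I] by (auto simp: trace_class_def)
next
  assume "(u, v) \<in> trace_eq I"
  then show "trace_class I u = trace_class I v"
    unfolding trace_class_def using te_sym te_trans by blast
qed

lemma cls_mult: "trace_mult I (trace_class I u) (trace_class I v) = trace_class I (u @ v)"
  unfolding trace_mult_def trace_class_def
  using te_app te_trans te_refl by blast


lemma car_cls: "x \<in> carrier (trace_monoid E I) \<Longrightarrow> \<exists>w. x = trace_class I w"
  by (auto simp: trace_monoid_def)

lemma mult_tm: "x \<otimes>\<^bsub>trace_monoid E I\<^esub> y = trace_mult I x y"
  by (simp add: trace_monoid_def)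

lemma nil_app: "([], u @ v) \<in> trace_eq I \<Longrightarrow> u = [] \<and> v = []"
  using te_length by fastforce

theorem mainTheorem13:
  fixes E :: "'a set" and I :: "('a \<times> 'a) set" and \<alpha> :: "'a list set"
  assumes "I \<subseteq> E \<times> E" and "irrefl I" and "sym I"
    and "\<alpha> \<in> carrier (trace_monoid E I)"
  shows "(\<forall>X Y \<psi> \<psi>'. comma_obj (trace_monoid E I) \<alpha> X \<and> comma_obj (trace_monoid E I) \<alpha> Y \<and>
            comma_hom (trace_monoid E I) \<alpha> X Y \<psi> \<and> comma_hom (trace_monoid E I) \<alpha> X Y \<psi>'
            \<longrightarrow> \<psi> = \<psi>') \<and>
         (\<forall>X Y \<psi> \<psi>'. comma_obj (trace_monoid E I) \<alpha> X \<and> comma_obj (trace_monoid E I) \<alpha> Y \<and>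
            comma_hom (trace_monoid E I) \<alpha> X Y \<psi> \<and> comma_hom (trace_monoid E I) \<alpha> Y X \<psi>'
            \<longrightarrow> X = Y)"
proof (intro conjI allI impI)
  note irr = assms(2) and sy = assms(3)
  fix X Y :: "'a list set \<times> 'a list set \<times> 'a list set" and \<psi> \<psi>' :: "'a list set \<times> 'a list set"
  assume H: "comma_obj (trace_monoid E I) \<alpha> X \<and> comma_obj (trace_monoid E I) \<alpha> Y \<and>
            comma_hom (trace_monoid E I) \<alpha> X Y \<psi> \<and> comma_hom (trace_monoid E I) \<alpha> X Y \<psi>'"
  obtain b f g where X: "X = (b, f, g)" by (cases X) auto
  obtain b' f' g' where Y: "Y = (b', f', g')" by (cases Y) auto
  obtain p q where P: "\<psi> = (p, q)" by (cases \<psi>) auto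
  obtain p2 q2 where P2: "\<psi>' = (p2, q2)" by (cases \<psi>') auto
  have C: "f \<in> carrier (trace_monoid E I)" "g \<in> carrier (trace_monoid E I)"
    "f' \<in> carrier (trace_monoid E I)" "g' \<in> carrier (trace_monoid E I)"
    "p \<in> carrier (trace_monoid E I)" "q \<in> carrier (trace_monoid E I)"
    "p2 \<in> carrier (trace_monoid E I)" "q2 \<in> carrier (trace_monoid E I)"
    using H X Y P P2 by (auto simp: comma_obj_def comma_hom_def fm_hom_def)
  obtain wf wg wf' wg' wp wq wp2 wq2 where W:
    "f = trace_class I wf" "g = trace_class I wg" "f' = trace_class I wf'" "g' = trace_class I wg'"
    "p = trace_class I wp" "q = trace_class I wq" "p2 = trace_class I wp2" "q2 = trace_class I wq2"
    using C car_cls by metis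
  have E: "trace_class I (wp @ wf') = trace_class I wf" "trace_class I (wg' @ wq) = trace_class I wg"
    "trace_class I (wp2 @ wf') = trace_class I wf" "trace_class I (wg' @ wq2) = trace_class I wg"
    using H X Y P P2 W by (auto simp: comma_hom_def fm_comp_def mult_tm cls_mult)
  have "(wp, wp2) \<in> trace_eq I"
    using E cls_eq cancel_right[OF irr sy] by metis
  moreover have "(wq, wq2) \<in> trace_eq I"
    using E cls_eq cancel_left[OF irr] by metis
  ultimately show "\<psi> = \<psi>'" using P P2 W cls_eq by metis
next
  note irr = assms(2) and sy = assms(3)
  fix X Y :: "'a list set \<times> 'a list set \<times> 'a list set" and \<psi> \<psi>' :: "'a list set \<times> 'a list set"
  assume H: "comma_obj (trace_monoid E I) \<alpha> X \<and> comma_obj (trace_monoid E I) \<alpha> Y \<and>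
            comma_hom (trace_monoid E I) \<alpha> X Y \<psi> \<and> comma_hom (trace_monoid E I) \<alpha> Y X \<psi>'"
  obtain b f g where X: "X = (b, f, g)" by (cases X) auto
  obtain b' f' g' where Y: "Y = (b', f', g')" by (cases Y) auto
  obtain p q where P: "\<psi> = (p, q)" by (cases \<psi>) auto
  obtain p2 q2 where P2: "\<psi>' = (p2, q2)" by (cases \<psi>') auto
  have C: "f \<in> carrier (trace_monoid E I)" "g \<in> carrier (trace_monoid E I)"
    "f' \<in> carrier (trace_monoid E I)" "g' \<in> carrier (trace_monoid E I)"
    "p \<in> carrier (trace_monoid E I)" "q \<in> carrier (trace_monoid E I)"
    "p2 \<in> carrier (trace_monoid E I)" "q2 \<in> carrier (trace_monoid E I)"
    "b \<in> carrier (trace_monoid E I)" "b' \<in> carrier (trace_monoid E I)"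
    using H X Y P P2 by (auto simp: comma_obj_def comma_hom_def fm_hom_def)
  obtain wf wg wf' wg' wp wq wp2 wq2 wb wb' where W:
    "f = trace_class I wf" "g = trace_class I wg" "f' = trace_class I wf'" "g' = trace_class I wg'"
    "p = trace_class I wp" "q = trace_class I wq" "p2 = trace_class I wp2" "q2 = trace_class I wq2"
    "b = trace_class I wb" "b' = trace_class I wb'"
    using C car_cls by metis
  have E: "(wp @ wf', wf) \<in> trace_eq I" "(wg' @ wq, wg) \<in> trace_eq I"
    "(wp2 @ wf, wf') \<in> trace_eq I" "(wg @ wq2, wg') \<in> trace_eq I"
    "((wq @ wb) @ wp, wb') \<in> trace_eq I"
    using H X Y P P2 W by (auto simp: comma_hom_def fm_comp_def fm_hom_def mult_tm cls_mult cls_eq)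
  have "((wp @ wp2) @ wf, [] @ wf) \<in> trace_eq I"
    using E te_app[OF te_refl E(3), of wp] te_trans by (metis append_Nil append_assoc)
  then have "([], wp @ wp2) \<in> trace_eq I" using cancel_right[OF irr sy] te_sym by blast
  then have pp: "wp = []" "wp2 = []" using nil_app by blast+
  have "(wg @ (wq2 @ wq), wg @ []) \<in> trace_eq I"
    using E te_app[OF E(4) te_refl, of wq] te_trans by (metis append_Nil2 append_assoc)
  then have "([], wq2 @ wq) \<in> trace_eq I" using cancel_left[OF irr] te_sym by blast
  then have qq: "wq = []" "wq2 = []" using nil_app by blast+
  show "X = Y" using E pp qq X Y W cls_eq by (metis append_Nil append_Nil2)
qed

end
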